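(* Let $\beta>0$. For every $x\in\mathbb N$ and $h\in(0,\beta/2)$, $$\kappa^x(h):=\widetilde{\mathbf P}_h\big(X_i>-x\ \ \forall i\in\mathbb N\big)=1-e^{-2hx}\,\frac{1-e^{h-\beta/2}}{1-e^{-h-\beta/2}}.$$ Moreover, for every $c>0$ and every $[h_1,h_2]\subset(0,\beta/2)$, $$\lim_{k\to\infty}\ \sup_{0\le x\le c\log k,\ h\in[h_1,h_2]}\big|\widetilde{\mathbf P}_h(X_i>-x,\ 1\le i\le k)-\kappa^x(h)\big|=0.$$
   Context: $c_\beta=\frac{1+e^{-\beta/2}}{1-e^{-\beta/2}}$, $\mathbf P_\beta(k)=e^{-\beta|k|/2}/c_\beta$ on $\mathbb Z$, $\mathcal L(h)=\log\sum_ke^{hk}\mathbf P_\beta(k)$ for $|h|<\beta/2$. For $|h|<\beta/2$, $\widetilde{\mathbf P}_h$ is the law under which $X=(X_i)_{i\ge0}$ is a random walk with $X_0=0$ and i.i.d. increments of law $\widetilde{\mathbf P}_h(k)=\mathbf P_\beta(k)e^{hk-\mathcal L(h)}$, $k\in\mathbb Z$. *)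

theory Defs
  imports "HOL-Probability.Probability"
begin

definition c_beta :: "real \<Rightarrow> real" where
  "c_beta \<beta> = (1 + exp (-\<beta>/2)) / (1 - exp (-\<beta>/2))"

definition P_beta :: "real \<Rightarrow> int \<Rightarrow> real" where
  "P_beta \<beta> k = exp (-\<beta> * \<bar>real_of_int k\<bar> / 2) / c_beta \<beta>"

definition L_beta :: "real \<Rightarrow> real \<Rightarrow> real" where
  "L_beta \<beta> h = ln (\<Sum>\<^sub>\<infinity>k\<in>(UNIV::int set). exp (h * real_of_int k) * P_beta \<beta> k)"

text \<open>Tilted increment law (a probability mass function on the integers for |h| < beta/2).\<close>
definition tilt_pmf :: "real \<Rightarrow> real \<Rightarrow> int pmf" where
  "tilt_pmf \<beta> h = embed_pmf (\<lambda>k. P_beta \<beta> k * exp (h * real_of_int k - L_beta \<beta> h))"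

text \<open>Law of the i.i.d. increment sequence (Delta_1, Delta_2, ...) under the tilted measure;
  the walk is X_i = Delta_1 + ... + Delta_i, X_0 = 0.\<close>
definition walk_law :: "real \<Rightarrow> real \<Rightarrow> int stream measure" where
  "walk_law \<beta> h = stream_space (measure_pmf (tilt_pmf \<beta> h))"

definition walk :: "nat \<Rightarrow> int stream \<Rightarrow> int" where
  "walk i \<omega> = (\<Sum>j<i. \<omega> !! j)"

definition kappa :: "real \<Rightarrow> nat \<Rightarrow> real \<Rightarrow> real" where
  "kappa \<beta> x h = measure (walk_law \<beta> h)
     {\<omega> \<in> space (walk_law \<beta> h). \<forall>i\<ge>1. walk i \<omega> > - int x}"

definition surv :: "real \<Rightarrow> nat \<Rightarrow> nat \<Rightarrow> real \<Rightarrow> real" where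
  "surv \<beta> k x h = measure (walk_law \<beta> h)
     {\<omega> \<in> space (walk_law \<beta> h). \<forall>i\<in>{1..k}. walk i \<omega> > - int x}"

end

theory Submission
  imports Defs
begin

lemma int_split_cases: "(k::int) \<in> range int \<or> k \<in> range (\<lambda>n. - int n - 1)"
proof (cases "k \<ge> 0")
  case True then have "k = int (nat k)" by simp
  then show ?thesis by blast
next
  case False then have "k = - int (nat (-k-1)) - 1" by simp
  then show ?thesis by blast
qed

lemma int_has_sum:
  fixes f :: "int \<Rightarrow> real"
  assumes "\<And>k. f k \<ge> 0" "(\<lambda>n. f (int n)) sums A" "(\<lambda>n. f (- int n - 1)) sums B"
  shows "(f has_sum (A+B)) UNIV"
proof -
  have s1: "((\<lambda>n. f (int n)) has_sum A) UNIV"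
    by (rule sums_nonneg_imp_has_sum[OF assms(2)]) (rule assms(1))
  have s1': "(f has_sum A) (range int)"
    using s1 has_sum_reindex[of int UNIV f A] by (simp add: o_def)
  have s2: "((\<lambda>n. f (- int n - 1)) has_sum B) UNIV"
    by (rule sums_nonneg_imp_has_sum[OF assms(3)]) (rule assms(1))
  have inj: "inj (\<lambda>n::nat. - int n - 1)" by (rule injI) simp
  have s2': "(f has_sum B) (range (\<lambda>n. - int n - 1))"
    using s2 has_sum_reindex[OF inj, of f B] by (simp add: o_def)
  have d: "range int \<inter> range (\<lambda>n. - int n - 1) = {}" by auto
  have u: "range int \<union> range (\<lambda>n. - int n - 1) = UNIV" using int_split_cases by blast
  show ?thesis using has_sum_Un_disjoint[OF s1' s2' d] u by simp
qed
lemma nn_int_split: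
  fixes f :: "int \<Rightarrow> ennreal"
  shows "(\<integral>\<^sup>+x. f x \<partial>count_space UNIV) = (\<Sum>n. f (int n)) + (\<Sum>n. f (- int n - 1))"
proof -
  let ?A = "range int" and ?B = "range (\<lambda>n::nat. - int n - 1)"
  have inj: "inj (\<lambda>n::nat. - int n - 1)" by (rule injI) simp
  have "(\<integral>\<^sup>+x. f x \<partial>count_space UNIV) = (\<integral>\<^sup>+x. f x * indicator ?A x + f x * indicator ?B x \<partial>count_space UNIV)"
  proof (rule nn_integral_cong)
    fix x :: int
    show "f x = f x * indicator ?A x + f x * indicator ?B x"
    proof (cases "x \<ge> 0")
      case True
      then have "x = int (nat x)" by simp
      then have "x \<in> ?A" by (rule range_eqI)
      moreover have "x \<notin> ?B" using True by auto
      ultimately show ?thesis by simp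
    next
      case False
      then have "x = - int (nat (-x-1)) - 1" by simp
      then have "x \<in> ?B" by (rule range_eqI)
      moreover have "x \<notin> ?A" using False by auto
      ultimately show ?thesis by simp
    qed
  qed
  also have "\<dots> = (\<integral>\<^sup>+x. f x * indicator ?A x \<partial>count_space UNIV) + (\<integral>\<^sup>+x. f x * indicator ?B x \<partial>count_space UNIV)"
    by (rule nn_integral_add) simp_all
  also have "(\<integral>\<^sup>+x. f x * indicator ?A x \<partial>count_space UNIV) = (\<integral>\<^sup>+x. f x \<partial>count_space ?A)"
    by (rule nn_integral_count_space_indicator[symmetric]) simp
  also have "\<dots> = (\<integral>\<^sup>+n. f (int n) \<partial>count_space UNIV)"
    by (rule nn_integral_bij_count_space[symmetric]) (simp add: bij_betw_def)
  also have "\<dots> = (\<Sum>n. f (int n))" by (rule nn_integral_count_space_nat)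
  also have "(\<integral>\<^sup>+x. f x * indicator ?B x \<partial>count_space UNIV) = (\<integral>\<^sup>+x. f x \<partial>count_space ?B)"
    by (rule nn_integral_count_space_indicator[symmetric]) simp
  also have "\<dots> = (\<integral>\<^sup>+n. f (- int n - 1) \<partial>count_space UNIV)"
    by (rule nn_integral_bij_count_space[symmetric]) (simp add: bij_betw_def inj)
  also have "\<dots> = (\<Sum>n. f (- int n - 1))" by (rule nn_integral_count_space_nat)
  finally show ?thesis .
qed

lemma sums_ennreal: assumes "(\<And>n. (g::nat\<Rightarrow>real) n \<ge> 0)" "g sums A" shows "(\<Sum>n. ennreal (g n)) = ennreal A"
  using suminf_ennreal2[of g, OF assms(1) sums_summable[OF assms(2)]] sums_unique[OF assms(2)] by simp


definition "uu \<beta> h = exp (h - \<beta>/2)"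
definition "vv \<beta> h = exp (-h - \<beta>/2)"
definition "aa \<beta> = exp (-\<beta>/2)"
definition "KK \<beta> h = (1 - uu \<beta> h) * (1 - vv \<beta> h) / (1 - uu \<beta> h * vv \<beta> h)"
definition "CC \<beta> h = (1 - uu \<beta> h) / (1 - vv \<beta> h)"
definition "rho \<beta> h = (1 - uu \<beta> h) * (1 - vv \<beta> h) / (1 - aa \<beta>)^2"
definition "ZZ \<beta> h = (1/(1 - uu \<beta> h) + vv \<beta> h/(1 - vv \<beta> h)) / c_beta \<beta>"

context
  fixes \<beta> h :: real
  assumes bpos: "0 < \<beta>" and hpos: "0 < h" and hlt: "h < \<beta>/2"
begin

lemma basic: "0 < vv \<beta> h" "vv \<beta> h < aa \<beta>" "aa \<beta> < uu \<beta> h" "uu \<beta> h < 1" "0 < aa \<beta>" "aa \<beta> < 1"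
  "uu \<beta> h * vv \<beta> h = aa \<beta> ^ 2"
proof -
  show "0 < vv \<beta> h" "vv \<beta> h < aa \<beta>" "aa \<beta> < uu \<beta> h" "uu \<beta> h < 1" "0 < aa \<beta>" "aa \<beta> < 1"
    unfolding uu_def vv_def aa_def using bpos hpos hlt by auto
  have "uu \<beta> h * vv \<beta> h = exp ((h - \<beta>/2) + (-h - \<beta>/2))" unfolding uu_def vv_def by (rule exp_add[symmetric])
  also have "\<dots> = exp ((-\<beta>/2) + (-\<beta>/2))" by simp
  also have "\<dots> = aa \<beta> ^ 2" unfolding aa_def exp_add power2_eq_square ..
  finally show "uu \<beta> h * vv \<beta> h = aa \<beta> ^ 2" .
qed

lemma cb_pos: "c_beta \<beta> > 0"
proof -
  have "exp (-\<beta>/2) < 1" using bpos by simp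
  moreover have "exp (-\<beta>/2) > 0" by simp
  ultimately show ?thesis unfolding c_beta_def using bpos by (intro divide_pos_pos add_pos_pos) simp_all
qed

lemma Pexp_pos: "exp (h * real_of_int (int n)) * P_beta \<beta> (int n) = uu \<beta> h ^ n / c_beta \<beta>"
proof -
  have "exp (h * real n) * exp (-\<beta> * real n / 2) = exp (real n * (h - \<beta>/2))"
    by (simp add: exp_add[symmetric] algebra_simps)
  also have "\<dots> = uu \<beta> h ^ n" unfolding uu_def by (rule exp_of_nat_mult)
  finally show ?thesis unfolding P_beta_def by simp
qed

lemma Pexp_neg: "exp (h * real_of_int (- int n - 1)) * P_beta \<beta> (- int n - 1) = vv \<beta> h ^ (n+1) / c_beta \<beta>"
proof -
  have ab: "\<bar>real_of_int (- int n - 1)\<bar> = real (n+1)" by simp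
  have e: "h * real_of_int (- int n - 1) + -\<beta> * real (n+1) / 2 = real (n+1) * (-h - \<beta>/2)"
    by (simp add: field_simps)
  have "exp (h * real_of_int (- int n - 1)) * exp (-\<beta> * real (n+1) / 2) = exp (real (n+1) * (-h - \<beta>/2))"
    unfolding exp_add[symmetric] e ..
  also have "\<dots> = vv \<beta> h ^ (n+1)" unfolding vv_def by (rule exp_of_nat_mult)
  finally show ?thesis unfolding P_beta_def ab by simp
qed

lemma Z_has_sum: "((\<lambda>k. exp (h * real_of_int k) * P_beta \<beta> k) has_sum ZZ \<beta> h) UNIV"
proof -
  note b = basic
  have s1: "(\<lambda>n. exp (h * real_of_int (int n)) * P_beta \<beta> (int n)) sums ((1/(1 - uu \<beta> h)) / c_beta \<beta>)"
    unfolding Pexp_pos using b by (intro sums_divide geometric_sums) auto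
  have "(\<lambda>n. vv \<beta> h * vv \<beta> h ^ n) sums (vv \<beta> h * (1/(1 - vv \<beta> h)))"
    using b by (intro sums_mult geometric_sums) auto
  then have s2: "(\<lambda>n. exp (h * real_of_int (- int n - 1)) * P_beta \<beta> (- int n - 1)) sums ((vv \<beta> h/(1 - vv \<beta> h)) / c_beta \<beta>)"
    unfolding Pexp_neg by (intro sums_divide) simp
  have "((\<lambda>k. exp (h * real_of_int k) * P_beta \<beta> k) has_sum ((1/(1 - uu \<beta> h)) / c_beta \<beta> + (vv \<beta> h/(1 - vv \<beta> h)) / c_beta \<beta>)) UNIV"
    by (rule int_has_sum[OF _ s1 s2]) (use cb_pos in \<open>simp add: P_beta_def\<close>)
  then show ?thesis unfolding ZZ_def add_divide_distrib .
qed

lemma L_eq: "L_beta \<beta> h = ln (ZZ \<beta> h)"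
  unfolding L_beta_def using Z_has_sum by (simp add: infsumI)

lemma ZZ_pos: "ZZ \<beta> h > 0"
  unfolding ZZ_def using basic cb_pos by (intro divide_pos_pos add_pos_pos) auto

lemma KK_eq: "KK \<beta> h = 1 / (ZZ \<beta> h * c_beta \<beta>)"
proof -
  have u: "1 - uu \<beta> h \<noteq> 0" "1 - vv \<beta> h \<noteq> 0" "1 - uu \<beta> h * vv \<beta> h \<noteq> 0"
    using basic mult_strict_mono[of "aa \<beta>" 1 "aa \<beta>" 1] by (auto simp: power2_eq_square)
  have "ZZ \<beta> h * c_beta \<beta> = 1/(1 - uu \<beta> h) + vv \<beta> h/(1 - vv \<beta> h)"
    unfolding ZZ_def using cb_pos by simp
  also have "\<dots> = (1 - uu \<beta> h * vv \<beta> h) / ((1 - uu \<beta> h) * (1 - vv \<beta> h))"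
    using u by (simp add: field_simps)
  finally show ?thesis unfolding KK_def by simp
qed

lemma KK_pos: "KK \<beta> h > 0"
  unfolding KK_eq using ZZ_pos cb_pos by simp

lemma tilt_fun: "P_beta \<beta> k * exp (h * real_of_int k - L_beta \<beta> h) = exp (h * real_of_int k) * P_beta \<beta> k / ZZ \<beta> h"
  unfolding L_eq exp_diff using ZZ_pos by simp

lemma tilt_nonneg: "0 \<le> P_beta \<beta> k * exp (h * real_of_int k - L_beta \<beta> h)"
  unfolding P_beta_def using cb_pos by simp

lemma tilt_total: "(\<integral>\<^sup>+k. ennreal (P_beta \<beta> k * exp (h * real_of_int k - L_beta \<beta> h)) \<partial>count_space UNIV) = 1"
proof -
  note b = basic
  have s1: "(\<lambda>n. P_beta \<beta> (int n) * exp (h * real_of_int (int n) - L_beta \<beta> h)) sums ((1/(1 - uu \<beta> h)) / c_beta \<beta> / ZZ \<beta> h)"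
    unfolding tilt_fun Pexp_pos using b by (intro sums_divide geometric_sums) auto
  have "(\<lambda>n. vv \<beta> h * vv \<beta> h ^ n) sums (vv \<beta> h * (1/(1 - vv \<beta> h)))"
    using b by (intro sums_mult geometric_sums) auto
  then have s2: "(\<lambda>n. P_beta \<beta> (- int n - 1) * exp (h * real_of_int (- int n - 1) - L_beta \<beta> h)) sums ((vv \<beta> h/(1 - vv \<beta> h)) / c_beta \<beta> / ZZ \<beta> h)"
    unfolding tilt_fun Pexp_neg by (intro sums_divide) simp
  have "(\<integral>\<^sup>+k. ennreal (P_beta \<beta> k * exp (h * real_of_int k - L_beta \<beta> h)) \<partial>count_space UNIV)
     = ennreal ((1/(1 - uu \<beta> h)) / c_beta \<beta> / ZZ \<beta> h) + ennreal ((vv \<beta> h/(1 - vv \<beta> h)) / c_beta \<beta> / ZZ \<beta> h)"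
    unfolding nn_int_split using sums_ennreal[OF tilt_nonneg s1] sums_ennreal[OF tilt_nonneg s2] by simp
  also have "\<dots> = ennreal ((1/(1 - uu \<beta> h)) / c_beta \<beta> / ZZ \<beta> h + (vv \<beta> h/(1 - vv \<beta> h)) / c_beta \<beta> / ZZ \<beta> h)"
    using b cb_pos ZZ_pos by (intro ennreal_plus[symmetric]) auto
  also have "(1/(1 - uu \<beta> h)) / c_beta \<beta> / ZZ \<beta> h + (vv \<beta> h/(1 - vv \<beta> h)) / c_beta \<beta> / ZZ \<beta> h = ZZ \<beta> h / ZZ \<beta> h"
    unfolding ZZ_def by (simp only: add_divide_distrib)
  finally show ?thesis using ZZ_pos by simp
qed

lemma pmf_tilt: "pmf (tilt_pmf \<beta> h) k = exp (h * real_of_int k) * P_beta \<beta> k / ZZ \<beta> h"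
  unfolding tilt_pmf_def using tilt_nonneg tilt_total by (subst pmf_embed_pmf) (auto simp: tilt_fun)

lemma pmf_pos: "pmf (tilt_pmf \<beta> h) (int n) = KK \<beta> h * uu \<beta> h ^ n"
  unfolding pmf_tilt Pexp_pos KK_eq by simp

lemma pmf_neg: "pmf (tilt_pmf \<beta> h) (- int n - 1) = KK \<beta> h * vv \<beta> h ^ (n+1)"
  unfolding pmf_tilt Pexp_neg KK_eq by simp

lemma pmf_nn:
  assumes "\<And>d. F d \<ge> 0"
    "(\<lambda>n. KK \<beta> h * uu \<beta> h ^ n * F (int n)) sums A"
    "(\<lambda>n. KK \<beta> h * vv \<beta> h ^ (n+1) * F (- int n - 1)) sums B"
  shows "(\<integral>\<^sup>+d. ennreal (F d) \<partial>measure_pmf (tilt_pmf \<beta> h)) = ennreal (A + B)"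
proof -
  have nn1: "\<And>n. KK \<beta> h * uu \<beta> h ^ n * F (int n) \<ge> 0" using KK_pos basic assms(1) by simp
  have nn2: "\<And>n. KK \<beta> h * vv \<beta> h ^ (n+1) * F (- int n - 1) \<ge> 0" using KK_pos basic assms(1) by simp
  have "(\<integral>\<^sup>+d. ennreal (F d) \<partial>measure_pmf (tilt_pmf \<beta> h)) = (\<integral>\<^sup>+d. ennreal (pmf (tilt_pmf \<beta> h) d * F d) \<partial>count_space UNIV)"
    unfolding nn_integral_measure_pmf by (simp add: ennreal_mult')
  also have "\<dots> = ennreal A + ennreal B"
    unfolding nn_int_split pmf_pos pmf_neg using sums_ennreal[OF nn1 assms(2)] sums_ennreal[OF nn2 assms(3)] by simp
  also have "\<dots> = ennreal (A + B)"
    using sums_le[OF nn1 sums_zero assms(2)] sums_le[OF nn2 sums_zero assms(3)]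
    by (intro ennreal_plus[symmetric]) auto
  finally show ?thesis .
qed

end


definition "ww h = exp (-2*h)"
definition "phi \<beta> h (t::int) = CC \<beta> h * exp (-2*h*real_of_int t)"
definition "Phi \<beta> h t d = (if d \<le> -t then 1 else phi \<beta> h (t+d))"

lemma alg1: "1 - (a::real) \<noteq> 0 \<Longrightarrow> 1 + a \<noteq> 0 \<Longrightarrow>
  P / ((1 - a) * (1 + a)) * (1 / (1 - a)) + P / ((1 - a) * (1 + a)) * a * (1 / (1 - a)) = P / (1 - a)^2"
proof -
  assume x: "1 - a \<noteq> 0" and y: "1 + a \<noteq> 0"
  have g: "\<And>x y::real. x \<noteq> 0 \<Longrightarrow> y \<noteq> 0 \<Longrightarrow> P / (x * y) * (1 / x) + P / (x * y) * a * (1 / x) = P * (1 + a) / (y * (x * x))"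
    by (simp add: field_simps)
  show ?thesis unfolding g[OF x y] power2_eq_square using y by simp
qed

lemma alg2:
  assumes "(u::real) \<noteq> 1" "v \<noteq> 1" "u * v \<noteq> 1"
    "K = (1 - u) * (1 - v) / (1 - u * v)" "C = (1 - u) / (1 - v)"
  shows "K * C * v * (1 / (1 - v)) + K + K * v * (1 / (1 - v)) = C"
proof -
  define a where "a = 1 / (1 - v)"
  define b where "b = 1 / (1 - u * v)"
  have a: "a * (1 - v) = 1" using assms unfolding a_def by simp
  have bb: "b * (1 - u * v) = 1" using assms unfolding b_def by simp
  have K: "K = (1 - u) * (1 - v) * b" using assms unfolding b_def by simp
  have C: "C = (1 - u) * a" using assms unfolding a_def by simp
  show ?thesis unfolding a_def[symmetric] K C using a bb by algebra
qed

lemma alg3: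
  assumes "(u::real) \<noteq> 1" "v \<noteq> 1" "u * v \<noteq> 1"
    "K = (1 - u) * (1 - v) / (1 - u * v)" "C = (1 - u) / (1 - v)"
  shows "K * C * W * (1 / (1 - v)) + (K * (u * U) * W * (1 / (1 - v)) + K * C * W * u * ((U - 1) / (u - 1))) = C * W"
proof -
  define a where "a = 1 / (1 - v)"
  define b where "b = 1 / (1 - u * v)"
  define c where "c = 1 / (u - 1)"
  have a: "a * (1 - v) = 1" using assms unfolding a_def by simp
  have bb: "b * (1 - u * v) = 1" using assms unfolding b_def by simp
  have cc: "c * (u - 1) = 1" using assms unfolding c_def by simp
  have K: "K = (1 - u) * (1 - v) * b" using assms unfolding b_def by simp
  have C: "C = (1 - u) * a" using assms unfolding a_def by simp
  have e: "(U - 1) / (u - 1) = (U - 1) * c" unfolding c_def by simp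
  show ?thesis unfolding a_def[symmetric] K C e using a bb cc by algebra
qed

context
  fixes \<beta> h :: real
  assumes bpos: "0 < \<beta>" and hpos: "0 < h" and hlt: "h < \<beta>/2"
begin

lemmas basic' = basic[OF bpos hpos hlt]
lemmas pmf_nn' = pmf_nn[OF bpos hpos hlt]
lemmas KK_pos' = KK_pos[OF bpos hpos hlt]

lemma vv_eq: "vv \<beta> h = uu \<beta> h * ww h"
  unfolding uu_def vv_def ww_def exp_add[symmetric] by simp

lemma ww_pow: "exp (-2*h*real j) = ww h ^ j"
  unfolding ww_def using exp_of_nat2_mult[of "-2*h" j] by (simp add: mult.commute)

lemma ww_pos: "0 < ww h" "ww h < 1"
  unfolding ww_def using hpos by auto

lemma CC_pos: "0 < CC \<beta> h" "CC \<beta> h \<le> 1"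
  unfolding CC_def using basic' by auto

lemma rho_int: "(\<integral>\<^sup>+d. ennreal (exp (-h * real_of_int d)) \<partial>measure_pmf (tilt_pmf \<beta> h)) = ennreal (rho \<beta> h)"
proof -
  note b = basic'
  have ea: "uu \<beta> h * exp (-h) = aa \<beta>" "vv \<beta> h * exp h = aa \<beta>"
    unfolding uu_def vv_def aa_def exp_add[symmetric] by simp_all
  have t1: "KK \<beta> h * uu \<beta> h ^ n * exp (-h * real_of_int (int n)) = KK \<beta> h * aa \<beta> ^ n" for n
  proof -
    have "exp (-h * real_of_int (int n)) = exp (-h) ^ n" using exp_of_nat2_mult[of "-h" n] by simp
    then show ?thesis by (simp add: ea(1)[symmetric] power_mult_distrib)
  qed
  have t2: "KK \<beta> h * vv \<beta> h ^ (n+1) * exp (-h * real_of_int (- int n - 1)) = KK \<beta> h * aa \<beta> * aa \<beta> ^ n" for n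
  proof -
    have "exp (-h * real_of_int (- int n - 1)) = exp h ^ (n+1)" using exp_of_nat2_mult[of "h" "n+1"] by (simp add: algebra_simps)
    then show ?thesis by (simp add: ea(2)[symmetric] power_mult_distrib)
  qed
  have s1: "(\<lambda>n. KK \<beta> h * uu \<beta> h ^ n * exp (-h * real_of_int (int n))) sums (KK \<beta> h * (1 / (1 - aa \<beta>)))"
    unfolding t1 using b by (intro sums_mult geometric_sums) auto
  have s2: "(\<lambda>n. KK \<beta> h * vv \<beta> h ^ (n+1) * exp (-h * real_of_int (- int n - 1))) sums (KK \<beta> h * aa \<beta> * (1 / (1 - aa \<beta>)))"
    unfolding t2 using b by (intro sums_mult geometric_sums) auto
  have "KK \<beta> h * (1 / (1 - aa \<beta>)) + KK \<beta> h * aa \<beta> * (1 / (1 - aa \<beta>)) = rho \<beta> h"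
  proof -
    have n: "1 - aa \<beta> \<noteq> 0" "1 - aa \<beta> ^ 2 \<noteq> 0" "1 + aa \<beta> \<noteq> 0"
      using b mult_strict_mono[of "aa \<beta>" 1 "aa \<beta>" 1] by (auto simp: power2_eq_square)
    have KK': "KK \<beta> h = ((1 - uu \<beta> h) * (1 - vv \<beta> h)) / ((1 - aa \<beta>) * (1 + aa \<beta>))"
      unfolding KK_def b(7) by (simp add: power2_eq_square algebra_simps)
    show ?thesis unfolding KK' rho_def
      using alg1[OF n(1) n(3), of "(1 - uu \<beta> h) * (1 - vv \<beta> h)"] .
  qed
  then show ?thesis using pmf_nn'[OF _ s1 s2] by simp
qed

lemma Phi_nonneg: "Phi \<beta> h t d \<ge> 0"
  unfolding Phi_def phi_def using CC_pos by simp

lemma phi_id: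
  assumes "t \<ge> 0"
  shows "(\<integral>\<^sup>+d. ennreal (Phi \<beta> h t d) \<partial>measure_pmf (tilt_pmf \<beta> h)) = ennreal (phi \<beta> h t)"
proof -
  note b = basic'
  obtain m where tm: "t = int m" using assms by (metis nonneg_eq_int)
  have ne: "uu \<beta> h \<noteq> 1" "vv \<beta> h \<noteq> 1" "uu \<beta> h * vv \<beta> h \<noteq> 1"
    using b mult_strict_mono[of "aa \<beta>" 1 "aa \<beta>" 1] by (auto simp: power2_eq_square)
  have Kd: "KK \<beta> h = (1 - uu \<beta> h) * (1 - vv \<beta> h) / (1 - uu \<beta> h * vv \<beta> h)" by (simp add: KK_def)
  have Cd: "CC \<beta> h = (1 - uu \<beta> h) / (1 - vv \<beta> h)" by (simp add: CC_def)
  have vp: "vv \<beta> h ^ n = uu \<beta> h ^ n * ww h ^ n" for n unfolding vv_eq by (simp add: power_mult_distrib)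
  show ?thesis
  proof (cases m)
    case 0
    define f where "f n = KK \<beta> h * uu \<beta> h ^ n * Phi \<beta> h t (int n)" for n
    have "(\<lambda>i. f (i + 1)) = (\<lambda>i. KK \<beta> h * CC \<beta> h * vv \<beta> h * vv \<beta> h ^ i)"
    proof
      fix i
      have "Phi \<beta> h t (int (i+1)) = CC \<beta> h * ww h ^ (i+1)"
        unfolding Phi_def phi_def tm 0 using ww_pow[of "i+1"] by simp
      then show "f (i + 1) = KK \<beta> h * CC \<beta> h * vv \<beta> h * vv \<beta> h ^ i"
        unfolding f_def using vp[of "i+1"] by (simp add: algebra_simps)
    qed
    moreover have "(\<lambda>i. KK \<beta> h * CC \<beta> h * vv \<beta> h * vv \<beta> h ^ i) sums (KK \<beta> h * CC \<beta> h * vv \<beta> h * (1 / (1 - vv \<beta> h)))"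
      using b by (intro sums_mult geometric_sums) auto
    ultimately have "(\<lambda>i. f (i + 1)) sums (KK \<beta> h * CC \<beta> h * vv \<beta> h * (1 / (1 - vv \<beta> h)))" by simp
    then have s1: "f sums (KK \<beta> h * CC \<beta> h * vv \<beta> h * (1 / (1 - vv \<beta> h)) + KK \<beta> h)"
      unfolding sums_iff_shift by (simp add: f_def Phi_def tm 0)
    have "(\<lambda>n. KK \<beta> h * vv \<beta> h ^ (n+1) * Phi \<beta> h t (- int n - 1)) = (\<lambda>n. KK \<beta> h * vv \<beta> h * vv \<beta> h ^ n)"
      by (rule ext) (simp add: Phi_def tm 0)
    moreover have "(\<lambda>n. KK \<beta> h * vv \<beta> h * vv \<beta> h ^ n) sums (KK \<beta> h * vv \<beta> h * (1 / (1 - vv \<beta> h)))"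
      using b by (intro sums_mult geometric_sums) auto
    ultimately have s2: "(\<lambda>n. KK \<beta> h * vv \<beta> h ^ (n+1) * Phi \<beta> h t (- int n - 1)) sums (KK \<beta> h * vv \<beta> h * (1 / (1 - vv \<beta> h)))"
      by simp
    have "(\<integral>\<^sup>+d. ennreal (Phi \<beta> h t d) \<partial>measure_pmf (tilt_pmf \<beta> h)) = ennreal (KK \<beta> h * CC \<beta> h * vv \<beta> h * (1 / (1 - vv \<beta> h)) + KK \<beta> h + KK \<beta> h * vv \<beta> h * (1 / (1 - vv \<beta> h)))"
      using pmf_nn'[OF Phi_nonneg s1[unfolded f_def] s2] .
    also have "\<dots> = ennreal (CC \<beta> h)" using alg2[OF ne Kd Cd] by simp
    finally show ?thesis by (simp add: phi_def tm 0)
  next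
    case (Suc k)
    have "(\<lambda>n. KK \<beta> h * uu \<beta> h ^ n * Phi \<beta> h t (int n)) = (\<lambda>n. KK \<beta> h * CC \<beta> h * ww h ^ Suc k * vv \<beta> h ^ n)"
    proof
      fix n
      have "Phi \<beta> h t (int n) = CC \<beta> h * (ww h ^ Suc k * ww h ^ n)"
        unfolding Phi_def phi_def tm Suc using ww_pow[of "Suc k + n"] by (simp add: power_add add.assoc)
      then show "KK \<beta> h * uu \<beta> h ^ n * Phi \<beta> h t (int n) = KK \<beta> h * CC \<beta> h * ww h ^ Suc k * vv \<beta> h ^ n"
        using vp[of n] by (simp add: algebra_simps)
    qed
    moreover have "(\<lambda>n. KK \<beta> h * CC \<beta> h * ww h ^ Suc k * vv \<beta> h ^ n) sums (KK \<beta> h * CC \<beta> h * ww h ^ Suc k * (1 / (1 - vv \<beta> h)))"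
      using b by (intro sums_mult geometric_sums) auto
    ultimately have s1: "(\<lambda>n. KK \<beta> h * uu \<beta> h ^ n * Phi \<beta> h t (int n)) sums (KK \<beta> h * CC \<beta> h * ww h ^ Suc k * (1 / (1 - vv \<beta> h)))"
      by simp
    define g where "g n = KK \<beta> h * vv \<beta> h ^ (n+1) * Phi \<beta> h t (- int n - 1)" for n
    have "(\<lambda>i. g (i + k)) = (\<lambda>i. KK \<beta> h * vv \<beta> h ^ (k+1) * vv \<beta> h ^ i)"
      by (rule ext) (simp add: g_def Phi_def tm Suc power_add algebra_simps)
    moreover have "(\<lambda>i. KK \<beta> h * vv \<beta> h ^ (k+1) * vv \<beta> h ^ i) sums (KK \<beta> h * vv \<beta> h ^ (k+1) * (1 / (1 - vv \<beta> h)))"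
      using b by (intro sums_mult geometric_sums) auto
    ultimately have "(\<lambda>i. g (i + k)) sums (KK \<beta> h * vv \<beta> h ^ (k+1) * (1 / (1 - vv \<beta> h)))" by simp
    then have s2': "g sums (KK \<beta> h * vv \<beta> h ^ (k+1) * (1 / (1 - vv \<beta> h)) + sum g {..<k})"
      unfolding sums_iff_shift .
    have "sum g {..<k} = (\<Sum>i<k. KK \<beta> h * CC \<beta> h * ww h ^ Suc k * uu \<beta> h * uu \<beta> h ^ i)"
    proof (rule sum.cong)
      fix i assume "i \<in> {..<k}"
      then have ik: "i < k" by simp
      have "Phi \<beta> h t (- int i - 1) = CC \<beta> h * ww h ^ (k - i)"
        unfolding Phi_def phi_def tm Suc using ik ww_pow[of "k - i"] by (simp add: of_nat_diff)
      moreover have "vv \<beta> h ^ (i+1) * ww h ^ (k - i) = uu \<beta> h * uu \<beta> h ^ i * ww h ^ Suc k"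
      proof -
        have "ww h ^ (i+1) * ww h ^ (k - i) = ww h ^ Suc k" using ik by (simp add: power_add[symmetric])
        moreover have "vv \<beta> h ^ (i+1) * ww h ^ (k - i) = uu \<beta> h ^ (i+1) * (ww h ^ (i+1) * ww h ^ (k - i))"
          unfolding vp by (simp only: mult.assoc)
        ultimately have "vv \<beta> h ^ (i+1) * ww h ^ (k - i) = uu \<beta> h ^ (i+1) * ww h ^ Suc k" by metis
        then show ?thesis by simp
      qed
      ultimately show "g i = KK \<beta> h * CC \<beta> h * ww h ^ Suc k * uu \<beta> h * uu \<beta> h ^ i"
        unfolding g_def by (simp add: algebra_simps)
    qed simp
    also have "\<dots> = KK \<beta> h * CC \<beta> h * ww h ^ Suc k * uu \<beta> h * ((uu \<beta> h ^ k - 1) / (uu \<beta> h - 1))"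
      using ne by (simp add: sum_distrib_left[symmetric] geometric_sum)
    finally have s2: "g sums (KK \<beta> h * (uu \<beta> h * uu \<beta> h ^ k) * ww h ^ Suc k * (1 / (1 - vv \<beta> h)) + KK \<beta> h * CC \<beta> h * ww h ^ Suc k * uu \<beta> h * ((uu \<beta> h ^ k - 1) / (uu \<beta> h - 1)))"
      using s2' vp[of "k+1"] by (simp add: algebra_simps)
    have "(\<integral>\<^sup>+d. ennreal (Phi \<beta> h t d) \<partial>measure_pmf (tilt_pmf \<beta> h)) = ennreal (KK \<beta> h * CC \<beta> h * ww h ^ Suc k * (1 / (1 - vv \<beta> h)) + (KK \<beta> h * (uu \<beta> h * uu \<beta> h ^ k) * ww h ^ Suc k * (1 / (1 - vv \<beta> h)) + KK \<beta> h * CC \<beta> h * ww h ^ Suc k * uu \<beta> h * ((uu \<beta> h ^ k - 1) / (uu \<beta> h - 1))))"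
      using pmf_nn'[OF Phi_nonneg s1 s2[unfolded g_def]] .
    also have "\<dots> = ennreal (CC \<beta> h * ww h ^ Suc k)" using alg3[OF ne Kd Cd] by simp
    finally show ?thesis unfolding phi_def tm Suc using ww_pow[of "Suc k"] by simp
  qed
qed

end


lemma walk_pred[measurable]: "Measurable.pred (stream_space (measure_pmf p)) (\<lambda>\<omega>. walk i \<omega> \<le> s)"
proof -
  have "(\<lambda>\<omega>::int stream. \<Sum>j<i. real_of_int (\<omega> !! j)) \<in> borel_measurable (stream_space (measure_pmf p))"
    by measurable
  then have [measurable]: "(\<lambda>\<omega>. real_of_int (walk i \<omega>)) \<in> borel_measurable (stream_space (measure_pmf p))"
    by (simp add: walk_def)
  have "Measurable.pred (stream_space (measure_pmf p)) (\<lambda>\<omega>. real_of_int (walk i \<omega>) \<le> real_of_int s)"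
    by measurable
  then show ?thesis by simp
qed

lemma walk_0[simp]: "walk 0 \<omega> = 0" by (simp add: walk_def)

lemma walk_Suc_cons: "walk (Suc i) (d ## \<omega>) = d + walk i \<omega>"
  unfolding walk_def by (subst sum.lessThan_Suc_shift) simp

lemma space_walk[simp]: "space (walk_law \<beta> h) = UNIV"
  unfolding walk_law_def by (simp add: space_stream_space streams_UNIV)

definition "Ev \<beta> h n t = {\<omega> \<in> space (walk_law \<beta> h). \<exists>i\<in>{1..n}. walk i \<omega> \<le> -t}"
definition "gg \<beta> h n t = measure (walk_law \<beta> h) (Ev \<beta> h n t)"

lemma Ev_sets[measurable]: "Ev \<beta> h n t \<in> sets (walk_law \<beta> h)"
  unfolding Ev_def walk_law_def by measurable

lemma W_prob: "prob_space (walk_law \<beta> h)"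
  unfolding walk_law_def by (rule prob_space.prob_space_stream_space) (rule measure_pmf.prob_space_axioms)

lemma Ev_cons: "{\<omega> \<in> space (walk_law \<beta> h). d ## \<omega> \<in> Ev \<beta> h (Suc n) t} =
  (if d \<le> -t then space (walk_law \<beta> h) else Ev \<beta> h n (t + d))"
proof -
  have "(\<exists>i\<in>{1..Suc n}. walk i (d ## \<omega>) \<le> -t) \<longleftrightarrow> (d \<le> -t \<or> (\<exists>j\<in>{1..n}. walk j \<omega> \<le> -(t+d)))" for \<omega>
  proof
    assume "\<exists>i\<in>{1..Suc n}. walk i (d ## \<omega>) \<le> -t"
    then obtain i where i: "i \<in> {1..Suc n}" "walk i (d ## \<omega>) \<le> -t" by blast
    then obtain j where j: "i = Suc j" "j \<le> n" by (cases i) auto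
    show "d \<le> -t \<or> (\<exists>j\<in>{1..n}. walk j \<omega> \<le> -(t+d))"
    proof (cases "j = 0")
      case True then show ?thesis using i j walk_Suc_cons[of 0 d \<omega>] by simp
    next
      case False then have "j \<in> {1..n}" using j by simp
      moreover have "walk j \<omega> \<le> -(t+d)" using i j walk_Suc_cons[of j d \<omega>] by simp
      ultimately show ?thesis by blast
    qed
  next
    assume "d \<le> -t \<or> (\<exists>j\<in>{1..n}. walk j \<omega> \<le> -(t+d))"
    then show "\<exists>i\<in>{1..Suc n}. walk i (d ## \<omega>) \<le> -t"
    proof
      assume "d \<le> -t"
      then show ?thesis using walk_Suc_cons[of 0 d \<omega>] by (intro bexI[of _ 1]) auto
    next
      assume "\<exists>j\<in>{1..n}. walk j \<omega> \<le> -(t+d)"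
      then obtain j where "j \<in> {1..n}" "walk j \<omega> \<le> -(t+d)" by blast
      then show ?thesis using walk_Suc_cons[of j d \<omega>] by (intro bexI[of _ "Suc j"]) auto
    qed
  qed
  then show ?thesis unfolding Ev_def by auto
qed

lemma gg_rec: "ennreal (gg \<beta> h (Suc n) t) =
  (\<integral>\<^sup>+d. ennreal (if d \<le> -t then 1 else gg \<beta> h n (t + d)) \<partial>measure_pmf (tilt_pmf \<beta> h))"
proof -
  interpret S: prob_space "walk_law \<beta> h" by (rule W_prob)
  have "emeasure (walk_law \<beta> h) (Ev \<beta> h (Suc n) t) =
    (\<integral>\<^sup>+d. emeasure (walk_law \<beta> h) {\<omega> \<in> space (walk_law \<beta> h). d ## \<omega> \<in> Ev \<beta> h (Suc n) t} \<partial>measure_pmf (tilt_pmf \<beta> h))"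
    unfolding walk_law_def
    by (rule prob_space.emeasure_stream_space[OF measure_pmf.prob_space_axioms])
       (use Ev_sets[of \<beta> h "Suc n" t] in \<open>simp add: walk_law_def\<close>)
  also have "\<dots> = (\<integral>\<^sup>+d. ennreal (if d \<le> -t then 1 else gg \<beta> h n (t + d)) \<partial>measure_pmf (tilt_pmf \<beta> h))"
    unfolding Ev_cons by (intro nn_integral_cong) (use S.prob_space in \<open>simp add: gg_def S.emeasure_eq_measure\<close>)
  finally show ?thesis unfolding gg_def S.emeasure_eq_measure .
qed

lemma gg_0: "gg \<beta> h 0 t = 0" unfolding gg_def Ev_def by simp

lemma gg_nonneg: "gg \<beta> h n t \<ge> 0" unfolding gg_def by simp



context
  fixes \<beta> h :: real
  assumes bpos: "0 < \<beta>" and hpos: "0 < h" and hlt: "h < \<beta>/2"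
begin

lemmas b2 = basic[OF bpos hpos hlt]

lemma rho_nonneg: "0 \<le> rho \<beta> h"
  unfolding rho_def using b2 by simp

lemma rho_lt1: "rho \<beta> h < 1"
proof -
  have "uu \<beta> h * (uu \<beta> h + vv \<beta> h - 2 * aa \<beta>) = (uu \<beta> h - aa \<beta>)^2"
    using b2(7) by (simp add: power2_eq_square algebra_simps)
  moreover have "(uu \<beta> h - aa \<beta>)^2 > 0" using b2 by simp
  ultimately have p: "0 < uu \<beta> h * (uu \<beta> h + vv \<beta> h - 2 * aa \<beta>)" by simp
  have "uu \<beta> h > 0" using b2(3,5) by simp
  then have "uu \<beta> h + vv \<beta> h - 2 * aa \<beta> > 0" using zero_less_mult_pos[OF p] by simp
  then have "(1 - uu \<beta> h) * (1 - vv \<beta> h) < (1 - aa \<beta>)^2"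
    using b2(7) by (simp add: power2_eq_square algebra_simps)
  moreover have "(1 - aa \<beta>)^2 > 0" using b2 by simp
  ultimately show ?thesis unfolding rho_def by simp
qed

lemma phi_nonneg: "0 \<le> phi \<beta> h t"
  unfolding phi_def using CC_pos[OF bpos hpos hlt] by simp

lemma gg_bounds: "t \<ge> 0 \<Longrightarrow> gg \<beta> h n t \<le> phi \<beta> h t \<and> phi \<beta> h t \<le> gg \<beta> h n t + CC \<beta> h * exp (-h * real_of_int t) * rho \<beta> h ^ n"
proof (induction n arbitrary: t)
  case 0
  have "exp (-2*h*real_of_int t) \<le> exp (-h * real_of_int t)" using 0 hpos by (simp add: mult_nonneg_nonneg)
  then have "phi \<beta> h t \<le> CC \<beta> h * exp (-h * real_of_int t)"
    unfolding phi_def using CC_pos[OF bpos hpos hlt] by (intro mult_left_mono) auto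
  then show ?case using phi_nonneg by (simp add: gg_0)
next
  case (Suc n)
  let ?M = "measure_pmf (tilt_pmf \<beta> h)"
  let ?c = "CC \<beta> h * exp (-h * real_of_int t) * rho \<beta> h ^ n"
  have c0: "?c \<ge> 0" using CC_pos[OF bpos hpos hlt] rho_nonneg by simp
  have "ennreal (gg \<beta> h (Suc n) t) \<le> (\<integral>\<^sup>+d. ennreal (Phi \<beta> h t d) \<partial>?M)"
    unfolding gg_rec
  proof (intro nn_integral_mono ennreal_leI)
    fix d
    show "(if d \<le> -t then 1 else gg \<beta> h n (t + d)) \<le> Phi \<beta> h t d"
      using Suc.IH[of "t+d"] unfolding Phi_def by auto
  qed
  also have "\<dots> = ennreal (phi \<beta> h t)" by (rule phi_id[OF bpos hpos hlt Suc.prems])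
  finally have up: "gg \<beta> h (Suc n) t \<le> phi \<beta> h t" using phi_nonneg by simp
  have "ennreal (phi \<beta> h t) = (\<integral>\<^sup>+d. ennreal (Phi \<beta> h t d) \<partial>?M)"
    by (rule phi_id[OF bpos hpos hlt Suc.prems, symmetric])
  also have "\<dots> \<le> (\<integral>\<^sup>+d. ennreal (if d \<le> -t then 1 else gg \<beta> h n (t + d)) + ennreal ?c * ennreal (exp (-h * real_of_int d)) \<partial>?M)"
  proof (intro nn_integral_mono)
    fix d
    show "ennreal (Phi \<beta> h t d) \<le> ennreal (if d \<le> -t then 1 else gg \<beta> h n (t + d)) + ennreal ?c * ennreal (exp (-h * real_of_int d))"
    proof (cases "d \<le> -t")
      case True then show ?thesis by (simp add: Phi_def)
    next
      case False
      then have "phi \<beta> h (t+d) \<le> gg \<beta> h n (t + d) + CC \<beta> h * exp (-h * real_of_int (t+d)) * rho \<beta> h ^ n"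
        using Suc.IH[of "t+d"] by auto
      also have "CC \<beta> h * exp (-h * real_of_int (t+d)) * rho \<beta> h ^ n = ?c * exp (-h * real_of_int d)"
        by (simp add: algebra_simps exp_add[symmetric])
      finally have "Phi \<beta> h t d \<le> gg \<beta> h n (t + d) + ?c * exp (-h * real_of_int d)"
        using False by (simp add: Phi_def)
      then have "ennreal (Phi \<beta> h t d) \<le> ennreal (gg \<beta> h n (t + d) + ?c * exp (-h * real_of_int d))"
        by (rule ennreal_leI)
      also have "\<dots> = ennreal (gg \<beta> h n (t + d)) + ennreal ?c * ennreal (exp (-h * real_of_int d))"
        using c0 gg_nonneg by (simp add: ennreal_plus ennreal_mult)
      finally show ?thesis using False by simp
    qed
  qed
  also have "\<dots> = (\<integral>\<^sup>+d. ennreal (if d \<le> -t then 1 else gg \<beta> h n (t + d)) \<partial>?M) + ennreal ?c * (\<integral>\<^sup>+d. ennreal (exp (-h * real_of_int d)) \<partial>?M)"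
    by (simp add: nn_integral_add nn_integral_cmult)
  also have "\<dots> = ennreal (gg \<beta> h (Suc n) t) + ennreal ?c * ennreal (rho \<beta> h)"
    unfolding gg_rec rho_int[OF bpos hpos hlt] ..
  also have "\<dots> = ennreal (gg \<beta> h (Suc n) t + ?c * rho \<beta> h)"
    using c0 gg_nonneg rho_nonneg by (simp add: ennreal_plus ennreal_mult)
  finally have lo: "phi \<beta> h t \<le> gg \<beta> h (Suc n) t + ?c * rho \<beta> h"
    using c0 gg_nonneg rho_nonneg by (subst (asm) ennreal_le_iff) auto
  show ?case using up lo by (simp add: algebra_simps)
qed

end


context
  fixes \<beta> h :: real
  assumes bpos: "0 < \<beta>" and hpos: "0 < h" and hlt: "h < \<beta>/2"
begin

lemma Ev_inc: "incseq (\<lambda>n. Ev \<beta> h n t)"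
  by (rule incseq_SucI) (auto simp: Ev_def)

lemma gg_lim: "t \<ge> 0 \<Longrightarrow> (\<lambda>n. gg \<beta> h n t) \<longlonglongrightarrow> phi \<beta> h t"
proof -
  assume t: "t \<ge> 0"
  have r: "(\<lambda>n. rho \<beta> h ^ n) \<longlonglongrightarrow> 0"
    using rho_nonneg[OF bpos hpos hlt] rho_lt1[OF bpos hpos hlt] by (intro LIMSEQ_power_zero) simp
  have "(\<lambda>n. phi \<beta> h t - CC \<beta> h * exp (-h * real_of_int t) * rho \<beta> h ^ n) \<longlonglongrightarrow> phi \<beta> h t - CC \<beta> h * exp (-h * real_of_int t) * 0"
    by (intro tendsto_intros r)
  then have l: "(\<lambda>n. phi \<beta> h t - CC \<beta> h * exp (-h * real_of_int t) * rho \<beta> h ^ n) \<longlonglongrightarrow> phi \<beta> h t" by simp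
  show ?thesis
  proof (rule tendsto_sandwich[OF _ _ l tendsto_const])
    show "\<forall>\<^sub>F n in sequentially. phi \<beta> h t - CC \<beta> h * exp (-h * real_of_int t) * rho \<beta> h ^ n \<le> gg \<beta> h n t"
      using gg_bounds[OF bpos hpos hlt t] by (auto simp: algebra_simps)
    show "\<forall>\<^sub>F n in sequentially. gg \<beta> h n t \<le> phi \<beta> h t"
      using gg_bounds[OF bpos hpos hlt t] by auto
  qed
qed

lemma kappa_eq: "kappa \<beta> x h = 1 - phi \<beta> h (int x)"
proof -
  interpret S: prob_space "walk_law \<beta> h" by (rule W_prob)
  have l1: "(\<lambda>n. gg \<beta> h n (int x)) \<longlonglongrightarrow> measure (walk_law \<beta> h) (\<Union>n. Ev \<beta> h n (int x))"
    unfolding gg_def by (rule S.finite_Lim_measure_incseq) (auto intro: Ev_inc)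
  have U: "measure (walk_law \<beta> h) (\<Union>n. Ev \<beta> h n (int x)) = phi \<beta> h (int x)"
    using LIMSEQ_unique[OF l1 gg_lim] by simp
  have s: "{\<omega> \<in> space (walk_law \<beta> h). \<forall>i\<ge>1. walk i \<omega> > - int x} = space (walk_law \<beta> h) - (\<Union>n. Ev \<beta> h n (int x))"
  proof -
    have "(\<exists>n. \<exists>i\<in>{1..n}. walk i \<omega> \<le> - int x) \<longleftrightarrow> (\<exists>i\<ge>1. walk i \<omega> \<le> - int x)" for \<omega>
      by (metis atLeastAtMost_iff order_refl)
    then have "\<omega> \<in> {\<omega> \<in> space (walk_law \<beta> h). \<forall>i\<ge>1. walk i \<omega> > - int x} \<longleftrightarrow> \<omega> \<in> space (walk_law \<beta> h) - (\<Union>n. Ev \<beta> h n (int x))" for \<omega>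
      unfolding Ev_def by (simp add: not_le[symmetric])
    then show ?thesis by blast
  qed
  have "(\<Union>n. Ev \<beta> h n (int x)) \<in> sets (walk_law \<beta> h)" by measurable
  then show ?thesis unfolding kappa_def s using S.prob_compl U by simp
qed

lemma surv_eq: "surv \<beta> k x h = 1 - gg \<beta> h k (int x)"
proof -
  interpret S: prob_space "walk_law \<beta> h" by (rule W_prob)
  have s: "{\<omega> \<in> space (walk_law \<beta> h). \<forall>i\<in>{1..k}. walk i \<omega> > - int x} = space (walk_law \<beta> h) - Ev \<beta> h k (int x)"
    unfolding Ev_def by (auto simp: not_le)
  show ?thesis unfolding surv_def s gg_def by (rule S.prob_compl) measurable
qed

lemma diff_bounds: "0 \<le> surv \<beta> k x h - kappa \<beta> x h \<and> surv \<beta> k x h - kappa \<beta> x h \<le> rho \<beta> h ^ k"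
proof -
  have b: "gg \<beta> h k (int x) \<le> phi \<beta> h (int x) \<and> phi \<beta> h (int x) \<le> gg \<beta> h k (int x) + CC \<beta> h * exp (-h * real x) * rho \<beta> h ^ k"
    using gg_bounds[OF bpos hpos hlt, of "int x" k] by simp
  have "CC \<beta> h * exp (-h * real x) \<le> 1 * 1"
    using CC_pos[OF bpos hpos hlt] hpos by (intro mult_mono) auto
  then have "CC \<beta> h * exp (-h * real x) * rho \<beta> h ^ k \<le> 1 * rho \<beta> h ^ k"
    using rho_nonneg[OF bpos hpos hlt] by (intro mult_right_mono) auto
  then show ?thesis unfolding kappa_eq surv_eq using b by simp
qed

end

lemma cosh_mono:
  assumes "0 < h1" "h1 \<le> (h::real)"
  shows "exp h1 + exp (-h1) \<le> exp h + exp (-h)"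
proof -
  define p q where "p = exp h" and "q = exp h1"
  have q1: "1 < q" "q \<le> p" using assms by (auto simp: p_def q_def)
  have pq: "1 * 1 \<le> p * q" using q1 by (intro mult_mono) auto
  have eq: "p + 1/p - (q + 1/q) = (p - q) * (p * q - 1) / (p * q)"
    using q1 by (simp add: field_simps)
  have "(p - q) * (p * q - 1) / (p * q) \<ge> 0" using q1 pq by (intro divide_nonneg_pos mult_nonneg_nonneg) auto
  then have "q + 1/q \<le> p + 1/p" using eq by simp
  then show ?thesis unfolding p_def q_def by (simp add: exp_minus field_simps)
qed

lemma rho_mono:
  fixes \<beta> h1 h :: real
  assumes "0 < \<beta>" "0 < h1" "h1 \<le> h" "h < \<beta>/2"
  shows "rho \<beta> h \<le> rho \<beta> h1"
proof -
  have e: "(1 - uu \<beta> g) * (1 - vv \<beta> g) = 1 + aa \<beta> ^ 2 - aa \<beta> * (exp g + exp (-g))" for g :: real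
  proof -
    have "uu \<beta> g = aa \<beta> * exp g" "vv \<beta> g = aa \<beta> * exp (-g)"
      unfolding uu_def vv_def aa_def exp_add[symmetric] by (simp_all add: algebra_simps)
    moreover have "exp g * exp (-g) = 1" by (simp add: exp_minus)
    ultimately show ?thesis by (simp add: power2_eq_square algebra_simps)
  qed
  have "aa \<beta> * (exp h1 + exp (-h1)) \<le> aa \<beta> * (exp h + exp (-h))"
    using cosh_mono[OF assms(2,3)] by (intro mult_left_mono) (auto simp: aa_def)
  then show ?thesis unfolding rho_def e by (intro divide_right_mono) auto
qed



theorem mainTheorem8:
  fixes \<beta> :: real
  assumes "\<beta> > 0"
  shows "(\<forall>(x::nat) (h::real). 0 < h \<and> h < \<beta>/2 \<longrightarrow>
            kappa \<beta> x h = 1 - exp (-2 * h * real x) *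
              ((1 - exp (h - \<beta>/2)) / (1 - exp (-h - \<beta>/2))))
       \<and> (\<forall>(c::real) (h1::real) (h2::real). c > 0 \<and> 0 < h1 \<and> h1 \<le> h2 \<and> h2 < \<beta>/2 \<longrightarrow>
            (\<lambda>k::nat. SUP p\<in>{(x::nat, h::real). real x \<le> c * ln (real k) \<and> h1 \<le> h \<and> h \<le> h2}.
                \<bar>surv \<beta> k (fst p) (snd p) - kappa \<beta> (fst p) (snd p)\<bar>) \<longlonglongrightarrow> 0)"
proof (intro conjI allI impI)
  fix x :: nat and h :: real
  assume h: "0 < h \<and> h < \<beta>/2"
  show "kappa \<beta> x h = 1 - exp (-2 * h * real x) * ((1 - exp (h - \<beta>/2)) / (1 - exp (-h - \<beta>/2)))"
    unfolding kappa_eq[OF assms, of h x, OF conjunct1[OF h] conjunct2[OF h]] phi_def CC_def uu_def vv_def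
    by simp
next
  fix c h1 h2 :: real
  assume a: "c > 0 \<and> 0 < h1 \<and> h1 \<le> h2 \<and> h2 < \<beta>/2"
  define R where "R = rho \<beta> h1"
  have h1: "0 < h1" "h1 < \<beta>/2" using a by auto
  have R: "0 \<le> R" "R < 1" unfolding R_def using rho_nonneg[OF assms h1] rho_lt1[OF assms h1] by auto
  define S where "S k = {(x::nat, h::real). real x \<le> c * ln (real k) \<and> h1 \<le> h \<and> h \<le> h2}" for k :: nat
  define f where "f k p = \<bar>surv \<beta> k (fst p) (snd p) - kappa \<beta> (fst p) (snd p)\<bar>" for k :: nat and p :: "nat \<times> real"
  have fb: "0 \<le> f k p \<and> f k p \<le> R ^ k" if "p \<in> S k" for k p
  proof -
    obtain x h where p: "p = (x, h)" by (cases p)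
    have hh: "0 < h" "h < \<beta>/2" "h1 \<le> h" using that a unfolding p S_def by auto
    have d: "0 \<le> surv \<beta> k x h - kappa \<beta> x h \<and> surv \<beta> k x h - kappa \<beta> x h \<le> rho \<beta> h ^ k"
      by (rule diff_bounds[OF assms hh(1,2)])
    have "rho \<beta> h ^ k \<le> R ^ k" unfolding R_def
      using rho_mono[OF assms h1(1) hh(3) hh(2)] rho_nonneg[OF assms hh(1,2)] by (intro power_mono) auto
    then show ?thesis using d unfolding f_def p by simp
  qed
  have ne: "(0, h1) \<in> S k" if "k \<ge> 1" for k
    using that a unfolding S_def by auto
  have ev1: "\<forall>\<^sub>F k in sequentially. 0 \<le> (SUP p\<in>S k. f k p)"
    using eventually_ge_at_top[of "1::nat"]
  proof eventually_elim
    case (elim k)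
    have "bdd_above (f k ` S k)" using fb by (intro bdd_aboveI2[of _ _ "R ^ k"]) auto
    then show ?case using fb[OF ne[OF elim]] by (intro cSUP_upper2[OF _ ne[OF elim]]) auto
  qed
  have ev2: "\<forall>\<^sub>F k in sequentially. (SUP p\<in>S k. f k p) \<le> R ^ k"
    using eventually_ge_at_top[of "1::nat"]
  proof eventually_elim
    case (elim k)
    show ?case using fb ne[OF elim] by (intro cSUP_least) auto
  qed
  have "(\<lambda>k. SUP p\<in>S k. f k p) \<longlonglongrightarrow> 0"
    by (rule tendsto_sandwich[OF ev1 ev2 tendsto_const]) (rule LIMSEQ_power_zero, use R in simp)
  then show "(\<lambda>k::nat. SUP p\<in>{(x::nat, h::real). real x \<le> c * ln (real k) \<and> h1 \<le> h \<and> h \<le> h2}.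
                \<bar>surv \<beta> k (fst p) (snd p) - kappa \<beta> (fst p) (snd p)\<bar>) \<longlonglongrightarrow> 0"
    unfolding S_def f_def .
qed


end
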